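(* Let $f$ be a perfect coloring of $H(n,q)$ with quotient matrix $S$, and let $p$ be a positive integer. Then there exists a perfect coloring of $H(n,pq)$ with quotient matrix $pS+n(p-1)I$. In particular, if there is a $(b,c)$-coloring of $H(n,q)$, then there is a $(pb,pc)$-coloring of $H(n,pq)$.
   Context: The Hamming graph $H(n,q)$ has vertex set $\mathbb{Z}_q^n$, two vertices adjacent iff they differ in exactly one coordinate. A perfect $k$-coloring is a surjective map $f$ from the vertex set onto $\{1,\dots,k\}$ such that every vertex of color $i$ has exactly $s_{i,j}$ neighbours of color $j$ (constants depending only on $i,j$); $S=(s_{i,j})$ is the quotient matrix. $I$ is the identity matrix. A $(b,c)$-coloring of $H(n,q)$ is a perfect $2$-coloring with quotient matrix $\begin{pmatrix} n(q-1)-b & b\\ c & n(q-1)-c\end{pmatrix}$. *)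

theory Defs
  imports Main
begin

text \<open>Vertex set of the Hamming graph H(n,q): words of length n over {0..q-1},
  represented as functions nat => nat that vanish outside {0..n-1}.\<close>
definition hamming_vertices :: "nat \<Rightarrow> nat \<Rightarrow> (nat \<Rightarrow> nat) set" where
  "hamming_vertices n q = {x. (\<forall>i<n. x i < q) \<and> (\<forall>i\<ge>n. x i = 0)}"

definition hamming_adj :: "nat \<Rightarrow> (nat \<Rightarrow> nat) \<Rightarrow> (nat \<Rightarrow> nat) \<Rightarrow> bool" where
  "hamming_adj n x y \<longleftrightarrow> card {i. i < n \<and> x i \<noteq> y i} = 1"

text \<open>f is a perfect k-coloring of H(n,q) with quotient matrix S
  (colors 1..k; S i j for i,j in 1..k).\<close>
definition perfect_coloring ::
  "nat \<Rightarrow> nat \<Rightarrow> nat \<Rightarrow> ((nat \<Rightarrow> nat) \<Rightarrow> nat) \<Rightarrow> (nat \<Rightarrow> nat \<Rightarrow> nat) \<Rightarrow> bool" where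
  "perfect_coloring n q k f S \<longleftrightarrow>
     f ` hamming_vertices n q = {1..k} \<and>
     (\<forall>x\<in>hamming_vertices n q. \<forall>j\<in>{1..k}.
        card {y\<in>hamming_vertices n q. hamming_adj n x y \<and> f y = j} = S (f x) j)"

definition bc_coloring ::
  "nat \<Rightarrow> nat \<Rightarrow> nat \<Rightarrow> nat \<Rightarrow> ((nat \<Rightarrow> nat) \<Rightarrow> nat) \<Rightarrow> bool" where
  "bc_coloring n q b c f \<longleftrightarrow>
     perfect_coloring n q 2 f
       (\<lambda>i j. if i = 1 then (if j = 1 then n * (q - 1) - b else b)
              else (if j = 1 then c else n * (q - 1) - c))"

end

theory Submission
  imports Defs
begin

lemma L1: "card {v. v < p*q \<and> P (v mod q)} = p * card {w. w < (q::nat) \<and> P w}"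
proof (induction p)
  case 0 then show ?case by simp
next
  case (Suc p)
  have eq: "{v. v < Suc p*q \<and> P (v mod q)} = {v. v < p*q \<and> P (v mod q)} \<union> (\<lambda>w. p*q + w) ` {w. w < q \<and> P w}"
  proof (rule set_eqI, rule iffI)
    fix v assume "v \<in> {v. v < Suc p*q \<and> P (v mod q)}"
    hence v: "v < Suc p * q" "P (v mod q)" by auto
    show "v \<in> {v. v < p*q \<and> P (v mod q)} \<union> (\<lambda>w. p*q + w) ` {w. w < q \<and> P w}"
    proof (cases "v < p*q")
      case True then show ?thesis using v by auto
    next
      case False
      then obtain w where w: "v = p*q + w" by (metis le_Suc_ex not_less le_add_diff_inverse)
      hence "w < q" using v by simp
      moreover have "v mod q = w" using w \<open>w<q\<close> by simp
      ultimately show ?thesis using v w by auto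
    qed
  next
    fix v assume "v \<in> {v. v < p*q \<and> P (v mod q)} \<union> (\<lambda>w. p*q + w) ` {w. w < q \<and> P w}"
    then show "v \<in> {v. v < Suc p*q \<and> P (v mod q)}" by auto
  qed
  have "card {v. v < Suc p*q \<and> P (v mod q)} = card {v. v < p*q \<and> P (v mod q)} + card ((\<lambda>w. p*q + w) ` {w. w < q \<and> P w})"
    unfolding eq by (rule card_Un_disjoint) auto
  also have "card ((\<lambda>w. p*q + w) ` {w. w < q \<and> P w}) = card {w. w < q \<and> P w}"
    by (rule card_image) (auto simp: inj_on_def)
  finally show ?case using Suc by simp
qed

lemma L2:
  assumes "a < p*q" "(p::nat) \<ge> 1"
  shows "card {v. v < p*q \<and> v \<noteq> a \<and> P (v mod q)} =
         p * card {w. w < q \<and> w \<noteq> a mod q \<and> P w} + (if P (a mod q) then p - 1 else 0)"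
proof -
  have q: "q > 0" using assms by (cases q) auto
  have am: "a mod q < q" using q by simp
  show ?thesis
  proof (cases "P (a mod q)")
    case True
    have e1: "{v. v < p*q \<and> P (v mod q)} = insert a {v. v < p*q \<and> v \<noteq> a \<and> P (v mod q)}"
      using True assms(1) by auto
    have e2: "{w. w < q \<and> P w} = insert (a mod q) {w. w < q \<and> w \<noteq> a mod q \<and> P w}"
      using True am by auto
    have A: "card {v. v < p*q \<and> P (v mod q)} = Suc (card {v. v < p*q \<and> v \<noteq> a \<and> P (v mod q)})"
      unfolding e1 by (subst card_insert_disjoint) auto
    have B: "card {w. w < q \<and> P w} = Suc (card {w. w < q \<and> w \<noteq> a mod q \<and> P w})"
      unfolding e2 by (subst card_insert_disjoint) auto
    have C: "card {v. v < p*q \<and> P (v mod q)} = p * card {w. w < q \<and> P w}" by (rule L1)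
    obtain p' where p': "p = Suc p'" using assms(2) by (cases p) auto
    show ?thesis using A B C True unfolding p' by simp
  next
    case False
    have e1: "{v. v < p*q \<and> P (v mod q)} = {v. v < p*q \<and> v \<noteq> a \<and> P (v mod q)}"
      using False by auto
    have e2: "{w. w < q \<and> P w} = {w. w < q \<and> w \<noteq> a mod q \<and> P w}"
      using False by auto
    show ?thesis using L1[of p q P] False unfolding e1 e2 by simp
  qed
qed

lemma D:
  assumes x: "x \<in> hamming_vertices n Q"
  shows "card {z\<in>hamming_vertices n Q. hamming_adj n x z \<and> P z} =
         (\<Sum>i<n. card {v. v < Q \<and> v \<noteq> x i \<and> P (x(i:=v))})"
proof -
  let ?A = "\<lambda>i. (\<lambda>v. x(i:=v)) ` {v. v < Q \<and> v \<noteq> x i \<and> P (x(i:=v))}"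
  have eq: "{z\<in>hamming_vertices n Q. hamming_adj n x z \<and> P z} = (\<Union>i<n. ?A i)"
  proof (rule set_eqI, rule iffI)
    fix z assume "z \<in> {z\<in>hamming_vertices n Q. hamming_adj n x z \<and> P z}"
    hence z: "z \<in> hamming_vertices n Q" "card {i. i < n \<and> x i \<noteq> z i} = 1" "P z"
      by (auto simp: hamming_adj_def)
    then obtain i where i: "{i. i < n \<and> x i \<noteq> z i} = {i}"
      using card_1_singletonE[OF z(2)] by blast
    hence "i < n" "x i \<noteq> z i" by auto
    have "z = x(i := z i)"
    proof
      fix l show "z l = (x(i := z i)) l"
      proof (cases "l = i")
        case False
        show ?thesis
        proof (cases "l < n")
          case True
          have "l \<notin> {i. i < n \<and> x i \<noteq> z i}" using i False by simp
          then show ?thesis using True False by simp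
        next
          case f2: False then show ?thesis using x z(1) False by (auto simp: hamming_vertices_def)
        qed
      qed simp
    qed
    moreover have "z i < Q" using z(1) \<open>i<n\<close> by (auto simp: hamming_vertices_def)
    ultimately have "z \<in> ?A i" using \<open>x i \<noteq> z i\<close> z(3) by (intro image_eqI[of _ _ "z i"]) auto
    then show "z \<in> (\<Union>i<n. ?A i)" using \<open>i<n\<close> by blast
  next
    fix z assume "z \<in> (\<Union>i<n. ?A i)"
    then obtain i v where iv: "i < n" "v < Q" "v \<noteq> x i" "P (x(i:=v))" "z = x(i:=v)" by auto
    have "{l. l < n \<and> x l \<noteq> z l} = {i}" unfolding iv(5) using iv(1,3) by (auto split: if_splits)
    hence "hamming_adj n x z" by (simp add: hamming_adj_def)
    moreover have "z \<in> hamming_vertices n Q" using x iv by (auto simp: hamming_vertices_def)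
    ultimately show "z \<in> {z\<in>hamming_vertices n Q. hamming_adj n x z \<and> P z}" using iv by auto
  qed
  have "card (\<Union>i<n. ?A i) = (\<Sum>i<n. card (?A i))"
  proof (rule card_UN_disjoint)
    show "\<forall>i\<in>{..<n}. finite (?A i)" by auto
    show "\<forall>i\<in>{..<n}. \<forall>j\<in>{..<n}. i \<noteq> j \<longrightarrow> ?A i \<inter> ?A j = {}"
    proof (intro ballI impI)
      fix i j :: nat assume "i \<noteq> j"
      show "?A i \<inter> ?A j = {}"
      proof (rule ccontr)
        assume "?A i \<inter> ?A j \<noteq> {}"
        then obtain y where y: "y \<in> ?A i" "y \<in> ?A j" by blast
        from y(1) obtain v where "y = x(i:=v)" "v \<noteq> x i" by blast
        moreover from y(2) obtain w where "y = x(j:=w)" by blast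
        ultimately have "x(i:=v) = x(j:=w)" "v \<noteq> x i" by auto
        hence "(x(i:=v)) i = (x(j:=w)) i" by simp
        thus False using \<open>i\<noteq>j\<close> \<open>v \<noteq> x i\<close> by simp
      qed
    qed
  qed simp
  also have "\<dots> = (\<Sum>i<n. card {v. v < Q \<and> v \<noteq> x i \<and> P (x(i:=v))})"
  proof (rule sum.cong[OF refl], rule card_image, rule inj_onI)
    fix i v w assume "x(i:=v) = x(i:=w)"
    then have "(x(i:=v)) i = (x(i:=w)) i" by simp
    then show "v = w" by simp
  qed
  finally show ?thesis using eq by simp
qed

lemma deg_bound:
  assumes x: "x \<in> hamming_vertices n Q"
  shows "card {z\<in>hamming_vertices n Q. hamming_adj n x z \<and> P z} \<le> n * (Q - 1)"
proof -
  have "(\<Sum>i<n. card {v. v < Q \<and> v \<noteq> x i \<and> P (x(i:=v))}) \<le> (\<Sum>i<(n::nat). Q - 1)"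
  proof (rule sum_mono)
    fix i assume "i \<in> {..<n}"
    have "{v. v < Q \<and> v \<noteq> x i \<and> P (x(i:=v))} \<subseteq> {..<Q} - {x i}" by auto
    hence "card {v. v < Q \<and> v \<noteq> x i \<and> P (x(i:=v))} \<le> card ({..<Q} - {x i})"
      by (rule card_mono[rotated]) auto
    also have "\<dots> \<le> Q - 1" using x \<open>i \<in> {..<n}\<close>
      by (simp add: card_Diff_singleton_if hamming_vertices_def)
    finally show "card {v. v < Q \<and> v \<noteq> x i \<and> P (x(i:=v))} \<le> Q - 1" .
  qed
  then show ?thesis using D[OF x] by simp
qed

definition red :: "nat \<Rightarrow> (nat \<Rightarrow> nat) \<Rightarrow> nat \<Rightarrow> nat" where
  "red q x = (\<lambda>i. x i mod q)"

lemma red_upd: "red q (x(i:=v)) = (red q x)(i := v mod q)"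
  by (auto simp: red_def)

lemma red_in:
  assumes "x \<in> hamming_vertices n (p*q)"
  shows "red q x \<in> hamming_vertices n q"
proof -
  have "\<forall>i<n. x i mod q < q"
  proof (intro allI impI)
    fix i assume "i < n"
    hence "x i < p * q" using assms by (auto simp: hamming_vertices_def)
    hence "q > 0" by (metis mult_0_right not_gr0 not_less0)
    thus "x i mod q < q" by simp
  qed
  thus ?thesis using assms by (auto simp: hamming_vertices_def red_def)
qed

lemma part1:
  assumes p: "p \<ge> 1" and f: "perfect_coloring n q k f S"
  shows "perfect_coloring n (p * q) k (\<lambda>x. f (red q x))
                   (\<lambda>i j. p * S i j + (if i = j then n * (p - 1) else 0))"
proof -
  have sub: "hamming_vertices n q \<subseteq> hamming_vertices n (p*q)"
  proof
    fix x assume "x \<in> hamming_vertices n q"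
    moreover have "q \<le> p * q" using p by simp
    ultimately show "x \<in> hamming_vertices n (p*q)" unfolding hamming_vertices_def
      using less_le_trans by blast
  qed
  have redid: "red q x = x" if "x \<in> hamming_vertices n q" for x
  proof
    fix i show "red q x i = x i"
      using that unfolding red_def hamming_vertices_def
      by (cases "i < n") auto
  qed
  have img: "red q ` hamming_vertices n (p*q) = hamming_vertices n q"
  proof
    show "red q ` hamming_vertices n (p*q) \<subseteq> hamming_vertices n q" using red_in by auto
    show "hamming_vertices n q \<subseteq> red q ` hamming_vertices n (p*q)"
      using sub redid by (metis image_eqI subsetD subsetI)
  qed
  have surj: "(\<lambda>x. f (red q x)) ` hamming_vertices n (p*q) = {1..k}"
    using f img unfolding perfect_coloring_def by (metis image_image)
  have cnt: "card {z\<in>hamming_vertices n (p*q). hamming_adj n x z \<and> f (red q z) = j} =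
      p * S (f (red q x)) j + (if f (red q x) = j then n * (p - 1) else 0)"
    if x: "x \<in> hamming_vertices n (p*q)" and j: "j \<in> {1..k}" for x j
  proof -
    let ?y = "red q x"
    have y: "?y \<in> hamming_vertices n q" using red_in[OF x] .
    have "card {z\<in>hamming_vertices n (p*q). hamming_adj n x z \<and> f (red q z) = j}
        = (\<Sum>i<n. card {v. v < p*q \<and> v \<noteq> x i \<and> f (red q (x(i:=v))) = j})"
      by (rule D[OF x])
    also have "\<dots> = (\<Sum>i<n. p * card {w. w < q \<and> w \<noteq> ?y i \<and> f (?y(i:=w)) = j}
                   + (if f ?y = j then p - 1 else 0))"
    proof (rule sum.cong[OF refl])
      fix i assume i: "i \<in> {..<n}"
      have xi: "x i < p * q" using x i by (auto simp: hamming_vertices_def)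
      have e1: "?y i = x i mod q" by (simp add: red_def)
      have e2: "?y(i := x i mod q) = ?y" by (auto simp: red_def)
      show "card {v. v < p*q \<and> v \<noteq> x i \<and> f (red q (x(i:=v))) = j} =
            p * card {w. w < q \<and> w \<noteq> ?y i \<and> f (?y(i:=w)) = j} + (if f ?y = j then p - 1 else 0)"
        using L2[OF xi p, of "\<lambda>w. f (?y(i:=w)) = j"] unfolding red_upd e1 e2 by simp
    qed
    also have "\<dots> = p * (\<Sum>i<n. card {w. w < q \<and> w \<noteq> ?y i \<and> f (?y(i:=w)) = j})
                   + (if f ?y = j then n * (p - 1) else 0)"
      by (simp add: sum.distrib sum_distrib_left)
    also have "(\<Sum>i<n. card {w. w < q \<and> w \<noteq> ?y i \<and> f (?y(i:=w)) = j}) = S (f ?y) j"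
      using D[OF y, of "\<lambda>z. f z = j"] f y j unfolding perfect_coloring_def by auto
    finally show ?thesis .
  qed
  show ?thesis unfolding perfect_coloring_def using surj cnt by auto
qed

lemma pc_cong:
  assumes "perfect_coloring n q k f S" "\<And>i j. i \<in> {1..k} \<Longrightarrow> j \<in> {1..k} \<Longrightarrow> S i j = S' i j"
  shows "perfect_coloring n q k f S'"
proof -
  have "f x \<in> {1..k}" if "x \<in> hamming_vertices n q" for x
    using assms(1) that unfolding perfect_coloring_def by blast
  then show ?thesis using assms unfolding perfect_coloring_def by auto
qed

theorem theorem5:
  fixes n q k p :: nat and f :: "(nat \<Rightarrow> nat) \<Rightarrow> nat" and S :: "nat \<Rightarrow> nat \<Rightarrow> nat"
  assumes "p \<ge> 1"
  shows "(perfect_coloring n q k f S \<longrightarrow>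
            (\<exists>g. perfect_coloring n (p * q) k g
                   (\<lambda>i j. p * S i j + (if i = j then n * (p - 1) else 0))))
       \<and> (\<forall>b c. (\<exists>h. bc_coloring n q b c h) \<longrightarrow>
                 (\<exists>g. bc_coloring n (p * q) (p * b) (p * c) g))"
proof (intro conjI impI allI)
  assume "perfect_coloring n q k f S"
  then show "\<exists>g. perfect_coloring n (p * q) k g
                   (\<lambda>i j. p * S i j + (if i = j then n * (p - 1) else 0))"
    using part1[OF assms] by blast
next
  fix b c assume "\<exists>h. bc_coloring n q b c h"
  then obtain h where h: "bc_coloring n q b c h" by blast
  define S0 where "S0 = (\<lambda>i j. if i = (1::nat) then (if j = (1::nat) then n * (q - 1) - b else b)
              else (if j = 1 then c else n * (q - 1) - c))"
  have pc: "perfect_coloring n q 2 h S0" using h unfolding bc_coloring_def S0_def .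
  have "1 \<in> h ` hamming_vertices n q" using pc unfolding perfect_coloring_def by auto
  then obtain x where x: "x \<in> hamming_vertices n q" "h x = 1" by auto
  have "2 \<in> h ` hamming_vertices n q" using pc unfolding perfect_coloring_def by auto
  then obtain x' where x': "x' \<in> hamming_vertices n q" "h x' = 2" by auto
  have "b = card {y\<in>hamming_vertices n q. hamming_adj n x y \<and> h y = 2}"
    using pc x unfolding perfect_coloring_def S0_def by auto
  hence b: "b \<le> n * (q - 1)" using deg_bound[OF x(1)] by simp
  have "c = card {y\<in>hamming_vertices n q. hamming_adj n x' y \<and> h y = 1}"
    using pc x' unfolding perfect_coloring_def S0_def by auto
  hence c: "c \<le> n * (q - 1)" using deg_bound[OF x'(1)] by simp
  have nq: "q = 0 \<Longrightarrow> n = 0" using x(1) by (auto simp: hamming_vertices_def)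
  have ar: "p * (n * (q - 1) - t) + n * (p - 1) = n * (p * q - 1) - p * t" if "t \<le> n * (q - 1)" for t
  proof (cases "q = 0")
    case True then show ?thesis using nq by simp
  next
    case False
    have "int (p * (n * (q - 1) - t) + n * (p - 1)) = int p * (int n * (int q - 1) - int t) + int n * (int p - 1)"
      using that False assms by (simp add: of_nat_diff)
    also have "\<dots> = int n * (int p * int q - 1) - int p * int t" by (simp add: algebra_simps)
    also have "\<dots> = int (n * (p * q - 1) - p * t)"
    proof -
      have "p * t \<le> p * (n * (q - 1))" using that by simp
      also have "\<dots> = n * (p * q - p)" by (simp add: diff_mult_distrib2 algebra_simps)
      also have "\<dots> \<le> n * (p * q - 1)" using assms by (intro mult_le_mono2 diff_le_mono2) simp
      finally have "p * t \<le> n * (p * q - 1)" .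
      moreover have "p * q \<ge> 1" using False assms by simp
      ultimately show ?thesis by (simp add: of_nat_diff)
    qed
    finally show ?thesis unfolding of_nat_eq_iff .
  qed
  have g: "perfect_coloring n (p * q) 2 (\<lambda>x. h (red q x))
                   (\<lambda>i j. p * S0 i j + (if i = j then n * (p - 1) else 0))"
    using part1[OF assms pc] .
  show "\<exists>g. bc_coloring n (p * q) (p * b) (p * c) g"
    unfolding bc_coloring_def
    apply (rule exI, rule pc_cong[OF g])
    using ar[OF b] ar[OF c] by (auto simp: S0_def)
qed

end
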